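(* Let $Y$ be a compact finite-rank $k$-step nilspace with a fixed metric $d_Y$, and for each $i\in[k]$ let $Z_i$ be the $i$-th structure group of $Y$ with a fixed compatible metric $d_{Z_i}$. Then there is a collection of compact-nilspace isomorphisms $\psi_{i,y}:\pi_{i-1,i}^{-1}(y)\to\mathcal{D}_i(Z_i)$, for $i\in[k]$ and $y\in Y_{i-1}$, such that for every $\epsilon>0$ there exists $\delta>0$ with the following property: for all $i\in[k]$, $y\in Y_{i-1}$ and $a,b\in Y$ with $\pi_{i-1}(a)=\pi_{i-1}(b)=y$, if $d_Y(a,b)<\delta$ then $d_{Z_i}\big(\psi_{i,y}(\pi_i(a)),\psi_{i,y}(\pi_i(b))\big)<\epsilon$.
   Context: For a $k$-step compact nilspace $Y$, $\pi_i:Y\to Y_i$ denotes the projection to the $i$-th characteristic factor and $\pi_{i-1,i}:Y_i\to Y_{i-1}$ the projection between factors (so $\pi_{i-1}=\pi_{i-1,i}\circ\pi_i$). The $i$-th structure group $Z_i$ is the compact abelian group acting freely on $Y_i$ whose orbits are the fibers of $\pi_{i-1,i}$; finite rank means each $Z_i$ is a Lie group. For an abelian group $Z$, $\mathcal{D}_i(Z)$ is the nilspace on $Z$ whose $n$-cubes are the maps $c:\{0,1\}^n\to Z$ such that for every $(i+1)$-dimensional face $F$ of $\{0,1\}^n$ the alternating sum $\sum_{v\in F}(-1)^{|v|}c(v)$ vanishes (equivalently, polynomial maps of degree at most $i$); for compact $Z$ it is a compact nilspace. Fibers of $\pi_{i-1,i}$ are sub-nilspaces of $Y_i$. *)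

theory Defs
  imports "HOL-Analysis.Analysis"
begin

text \<open>Vertices of the discrete cube {0,1}^n are encoded as maps nat => bool vanishing
  outside {0..<n}; an n-cube on a set X is an extensional map from vertices to X.\<close>

definition vert :: "nat \<Rightarrow> (nat \<Rightarrow> bool) set" where
  "vert n = {v. \<forall>j. v j \<longrightarrow> j < n}"

definition top_vert :: "nat \<Rightarrow> (nat \<Rightarrow> bool)" where
  "top_vert n = (\<lambda>j. j < n)"

definition cube_morphism :: "nat \<Rightarrow> nat \<Rightarrow> ((nat \<Rightarrow> bool) \<Rightarrow> (nat \<Rightarrow> bool)) \<Rightarrow> bool" where
  "cube_morphism m n \<phi> \<longleftrightarrow>
     (\<forall>v\<in>vert m. \<phi> v \<in> vert n) \<and>
     (\<forall>j<n. \<exists>f. (f = (\<lambda>v. False) \<or> f = (\<lambda>v. True) \<or>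
                  (\<exists>i<m. f = (\<lambda>v. v i) \<or> f = (\<lambda>v. \<not> v i))) \<and>
                (\<forall>v\<in>vert m. \<phi> v j = f v))"

definition ins_bit :: "nat \<Rightarrow> bool \<Rightarrow> (nat \<Rightarrow> bool) \<Rightarrow> (nat \<Rightarrow> bool)" where
  "ins_bit j b w = (\<lambda>i. if i < j then w i else if i = j then b else w (i - 1))"

definition is_corner :: "'a set \<Rightarrow> (nat \<Rightarrow> ((nat \<Rightarrow> bool) \<Rightarrow> 'a) set) \<Rightarrow> nat
    \<Rightarrow> ((nat \<Rightarrow> bool) \<Rightarrow> 'a) \<Rightarrow> bool" where
  "is_corner X C n q \<longleftrightarrow>
     q \<in> (vert n - {top_vert n}) \<rightarrow>\<^sub>E X \<and>
     (\<forall>j<n. (\<lambda>w\<in>vert (n - 1). q (ins_bit j False w)) \<in> C (n - 1))"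

definition nilspace :: "'a set \<Rightarrow> (nat \<Rightarrow> ((nat \<Rightarrow> bool) \<Rightarrow> 'a) set) \<Rightarrow> bool" where
  "nilspace X C \<longleftrightarrow>
     (\<forall>n. C n \<subseteq> vert n \<rightarrow>\<^sub>E X) \<and>
     (\<forall>m n \<phi> c. cube_morphism m n \<phi> \<longrightarrow> c \<in> C n \<longrightarrow> (\<lambda>v\<in>vert m. c (\<phi> v)) \<in> C m) \<and>
     C 1 = vert 1 \<rightarrow>\<^sub>E X \<and>
     (\<forall>n\<ge>1. \<forall>q. is_corner X C n q \<longrightarrow>
        (\<exists>c\<in>C n. \<forall>v\<in>vert n - {top_vert n}. c v = q v))"

definition k_step_nilspace :: "nat \<Rightarrow> 'a set \<Rightarrow> (nat \<Rightarrow> ((nat \<Rightarrow> bool) \<Rightarrow> 'a) set) \<Rightarrow> bool" where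
  "k_step_nilspace k X C \<longleftrightarrow> nilspace X C \<and>
     (\<forall>c\<in>C (Suc k). \<forall>c'\<in>C (Suc k).
        (\<forall>v\<in>vert (Suc k) - {top_vert (Suc k)}. c v = c' v) \<longrightarrow> c = c')"

text \<open>Compact nilspace: X compact (in the metric space 'a, hence compact metrizable) and
  every cube set closed in the product topology on X^{0,1}^n.\<close>
definition compact_nilspace :: "'a::metric_space set \<Rightarrow> (nat \<Rightarrow> ((nat \<Rightarrow> bool) \<Rightarrow> 'a) set) \<Rightarrow> bool" where
  "compact_nilspace X C \<longleftrightarrow> nilspace X C \<and> compact X \<and>
     (\<forall>n. closedin (product_topology (\<lambda>_. top_of_set X) (vert n)) (C n))"

definition char_rel :: "'a set \<Rightarrow> (nat \<Rightarrow> ((nat \<Rightarrow> bool) \<Rightarrow> 'a) set) \<Rightarrow> nat \<Rightarrow> 'a \<Rightarrow> 'a \<Rightarrow> bool" where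
  "char_rel X C i x y \<longleftrightarrow> x \<in> X \<and> y \<in> X \<and>
     (\<exists>c\<in>C (Suc i). \<exists>c'\<in>C (Suc i).
        (\<forall>v\<in>vert (Suc i). v \<noteq> top_vert (Suc i) \<longrightarrow> c v = c' v) \<and>
        c (top_vert (Suc i)) = x \<and> c' (top_vert (Suc i)) = y)"

text \<open>pi_i : the projection to the i-th characteristic factor Y_i = X / ~_i
  (points of Y_i are the equivalence classes).\<close>
definition proj :: "'a set \<Rightarrow> (nat \<Rightarrow> ((nat \<Rightarrow> bool) \<Rightarrow> 'a) set) \<Rightarrow> nat \<Rightarrow> 'a \<Rightarrow> 'a set" where
  "proj X C i x = {y. char_rel X C i x y}"

definition factor :: "'a set \<Rightarrow> (nat \<Rightarrow> ((nat \<Rightarrow> bool) \<Rightarrow> 'a) set) \<Rightarrow> nat \<Rightarrow> 'a set set" where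
  "factor X C i = proj X C i ` X"

definition factor_cubes :: "'a set \<Rightarrow> (nat \<Rightarrow> ((nat \<Rightarrow> bool) \<Rightarrow> 'a) set) \<Rightarrow> nat \<Rightarrow> nat
    \<Rightarrow> ((nat \<Rightarrow> bool) \<Rightarrow> 'a set) set" where
  "factor_cubes X C i n = {(\<lambda>v\<in>vert n. proj X C i (c v)) | c. c \<in> C n}"

definition quotient_top :: "'a topology \<Rightarrow> ('a \<Rightarrow> 'b) \<Rightarrow> 'b topology" where
  "quotient_top T f = topology (\<lambda>U. U \<subseteq> f ` topspace T \<and>
      openin T {x \<in> topspace T. f x \<in> U})"

definition factor_top :: "'a::metric_space set \<Rightarrow> (nat \<Rightarrow> ((nat \<Rightarrow> bool) \<Rightarrow> 'a) set) \<Rightarrow> nat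
    \<Rightarrow> 'a set topology" where
  "factor_top X C i = quotient_top (top_of_set X) (proj X C i)"

definition fiber :: "'a set \<Rightarrow> (nat \<Rightarrow> ((nat \<Rightarrow> bool) \<Rightarrow> 'a) set) \<Rightarrow> nat \<Rightarrow> 'a set \<Rightarrow> 'a set set" where
  "fiber X C i y = {proj X C i a | a. a \<in> X \<and> proj X C (i - 1) a = y}"

definition fiber_cubes :: "'a set \<Rightarrow> (nat \<Rightarrow> ((nat \<Rightarrow> bool) \<Rightarrow> 'a) set) \<Rightarrow> nat \<Rightarrow> 'a set \<Rightarrow> nat
    \<Rightarrow> ((nat \<Rightarrow> bool) \<Rightarrow> 'a set) set" where
  "fiber_cubes X C i y n = {c \<in> factor_cubes X C i n. \<forall>v\<in>vert n. c v \<in> fiber X C i y}"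

definition D_cubes :: "'z::ab_group_add set \<Rightarrow> nat \<Rightarrow> nat \<Rightarrow> ((nat \<Rightarrow> bool) \<Rightarrow> 'z) set" where
  "D_cubes Z i n = {c \<in> vert n \<rightarrow>\<^sub>E Z. \<forall>J w. J \<subseteq> {..<n} \<and> card J = Suc i \<and> w \<in> vert n \<longrightarrow>
      (\<Sum>v\<in>{v\<in>vert n. \<forall>j<n. j \<notin> J \<longrightarrow> v j = w j}.
          if even (card {j. j < n \<and> v j}) then c v else - c v) = 0}"

definition is_subgroup_add :: "'z::ab_group_add set \<Rightarrow> bool" where
  "is_subgroup_add H \<longleftrightarrow> 0 \<in> H \<and> (\<forall>a\<in>H. \<forall>b\<in>H. a + b \<in> H) \<and> (\<forall>a\<in>H. - a \<in> H)"

text \<open>Z (a subgroup of an ambient abelian group) with metric dZ is a compact metrizable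
  abelian topological group.\<close>
definition compact_metric_group :: "'z::ab_group_add set \<Rightarrow> ('z \<Rightarrow> 'z \<Rightarrow> real) \<Rightarrow> bool" where
  "compact_metric_group Z dZ \<longleftrightarrow> is_subgroup_add Z \<and> Metric_space Z dZ \<and>
     compact_space (Metric_space.mtopology Z dZ) \<and>
     continuous_map (prod_topology (Metric_space.mtopology Z dZ) (Metric_space.mtopology Z dZ))
        (Metric_space.mtopology Z dZ) (\<lambda>(a, b). a + b) \<and>
     continuous_map (Metric_space.mtopology Z dZ) (Metric_space.mtopology Z dZ) uminus"

text \<open>(Z, dZ, act) is the i-th structure group of the nilspace (X, C): a compact abelian
  group acting continuously and freely on Y_i, with orbits the fibres of pi_{i-1,i},
  making Y_i a degree-i bundle over Y_{i-1}: a map over the same base as a cube of Y_i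
  is a cube iff it differs from it by a cube of D_i(Z).\<close>
definition structure_group :: "'a::metric_space set \<Rightarrow> (nat \<Rightarrow> ((nat \<Rightarrow> bool) \<Rightarrow> 'a) set) \<Rightarrow> nat
    \<Rightarrow> 'z::ab_group_add set \<Rightarrow> ('z \<Rightarrow> 'z \<Rightarrow> real) \<Rightarrow> ('z \<Rightarrow> 'a set \<Rightarrow> 'a set) \<Rightarrow> bool" where
  "structure_group X C i Z dZ act \<longleftrightarrow>
     compact_metric_group Z dZ \<and>
     (\<forall>z\<in>Z. \<forall>A\<in>factor X C i. act z A \<in> factor X C i) \<and>
     (\<forall>A\<in>factor X C i. act 0 A = A) \<and>
     (\<forall>z\<in>Z. \<forall>w\<in>Z. \<forall>A\<in>factor X C i. act (z + w) A = act z (act w A)) \<and>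
     (\<forall>z\<in>Z. \<forall>A\<in>factor X C i. act z A = A \<longrightarrow> z = 0) \<and>
     (\<forall>a\<in>X. \<forall>b\<in>X. (\<exists>z\<in>Z. act z (proj X C i a) = proj X C i b) \<longleftrightarrow>
                      proj X C (i - 1) a = proj X C (i - 1) b) \<and>
     continuous_map (prod_topology (Metric_space.mtopology Z dZ) (factor_top X C i))
        (factor_top X C i) (\<lambda>(z, A). act z A) \<and>
     (\<forall>n. \<forall>c\<in>C n. \<forall>g\<in>vert n \<rightarrow>\<^sub>E Z.
        (\<lambda>v\<in>vert n. act (g v) (proj X C i (c v))) \<in> factor_cubes X C i n
          \<longleftrightarrow> g \<in> D_cubes Z i n)"

text \<open>Lie (finite rank) condition for the compact group Z, stated as the no-small-subgroups
  property (for compact groups equivalent to being a Lie group).\<close>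
definition NSS_group :: "'z::ab_group_add set \<Rightarrow> ('z \<Rightarrow> 'z \<Rightarrow> real) \<Rightarrow> bool" where
  "NSS_group Z dZ \<longleftrightarrow> (\<exists>r>0. \<forall>H. H \<subseteq> Z \<and> is_subgroup_add H \<and>
      H \<subseteq> Metric_space.mball Z dZ 0 r \<longrightarrow> H = {0})"

definition fiber_iso :: "'a::metric_space set \<Rightarrow> (nat \<Rightarrow> ((nat \<Rightarrow> bool) \<Rightarrow> 'a) set) \<Rightarrow> nat \<Rightarrow> 'a set
    \<Rightarrow> 'z::ab_group_add set \<Rightarrow> ('z \<Rightarrow> 'z \<Rightarrow> real) \<Rightarrow> ('a set \<Rightarrow> 'z) \<Rightarrow> bool" where
  "fiber_iso X C i y Z dZ \<psi> \<longleftrightarrow>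
     homeomorphic_map (subtopology (factor_top X C i) (fiber X C i y))
        (Metric_space.mtopology Z dZ) \<psi> \<and>
     (\<forall>n. \<forall>c\<in>vert n \<rightarrow>\<^sub>E fiber X C i y.
        c \<in> fiber_cubes X C i y n \<longleftrightarrow> (\<lambda>v\<in>vert n. \<psi> (c v)) \<in> D_cubes Z i n)"

end

theory Submission
  imports Defs
begin

lemma finite_vert: "finite (vert n)"
proof -
  have "vert n \<subseteq> (\<lambda>S j. j \<in> S) ` Pow {..<n}"
  proof
    fix v assume "v \<in> vert n"
    hence "v = (\<lambda>j. j \<in> {j. v j})" "{j. v j} \<in> Pow {..<n}" by (auto simp: vert_def)
    thus "v \<in> (\<lambda>S j. j \<in> S) ` Pow {..<n}" by blast
  qed
  thus ?thesis by (rule finite_subset) auto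
qed

lemma top_vert_in [simp]: "top_vert n \<in> vert n"
  by (simp add: vert_def top_vert_def)

lemma nil_cube: "nilspace X C \<Longrightarrow> c \<in> C n \<Longrightarrow> c \<in> vert n \<rightarrow>\<^sub>E X"
  unfolding nilspace_def by blast

lemma cube_comp:
  assumes "nilspace X C" "cube_morphism m n \<phi>" "c \<in> C n"
  shows "(\<lambda>v\<in>vert m. c (\<phi> v)) \<in> C m"
proof -
  have "\<forall>m n \<phi> c. cube_morphism m n \<phi> \<longrightarrow> c \<in> C n \<longrightarrow> (\<lambda>v\<in>vert m. c (\<phi> v)) \<in> C m"
    using assms(1) unfolding nilspace_def by (elim conjE)
  thus ?thesis using assms(2,3) by blast
qed

lemma C1_all: "nilspace X C \<Longrightarrow> C 1 = vert 1 \<rightarrow>\<^sub>E X"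
  unfolding nilspace_def by (elim conjE)

lemma const_cube:
  assumes "nilspace X C" "a \<in> X"
  shows "(\<lambda>v\<in>vert n. a) \<in> C n"
proof -
  have c1: "(\<lambda>v\<in>vert 1. a) \<in> C 1" using assms C1_all[OF assms(1)] by auto
  have m: "cube_morphism n 1 (\<lambda>v j. False)"
    unfolding cube_morphism_def vert_def by auto
  have "(\<lambda>v\<in>vert n. (\<lambda>v\<in>vert 1. a) ((\<lambda>v j. False) v)) \<in> C n"
    using cube_comp[OF assms(1) m c1] .
  moreover have "(\<lambda>j::nat. False) \<in> vert 1" by (simp add: vert_def)
  ultimately show ?thesis by simp
qed

lemma char_rel_refl: "nilspace X C \<Longrightarrow> x \<in> X \<Longrightarrow> char_rel X C i x x"
proof -
  assume "nilspace X C" "x \<in> X"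
  hence c: "(\<lambda>v\<in>vert (Suc i). x) \<in> C (Suc i)" by (rule const_cube)
  have "(\<lambda>v\<in>vert (Suc i). x) (top_vert (Suc i)) = x" by simp
  with c \<open>x \<in> X\<close> show ?thesis unfolding char_rel_def by blast
qed

lemma char_rel_sym: "char_rel X C i x y \<Longrightarrow> char_rel X C i y x"
  unfolding char_rel_def by metis

lemma char_rel_X: "char_rel X C i x y \<Longrightarrow> x \<in> X \<and> y \<in> X"
  unfolding char_rel_def by blast

lemma ins0_apply: "ins_bit 0 b w j = (if j = 0 then b else w (j - 1))"
  by (simp add: ins_bit_def)

lemma char_rel_down:
  assumes N: "nilspace X C" and R: "char_rel X C (Suc i) x y"
  shows "char_rel X C i x y"
proof -
  define \<phi> where "\<phi> = ins_bit 0 True"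
  have phij: "\<phi> v j = (if j = 0 then True else v (j - 1))" for v j
    by (simp add: \<phi>_def ins0_apply)
  from R obtain c c' where cc: "c \<in> C (Suc (Suc i))" "c' \<in> C (Suc (Suc i))"
    "\<forall>v\<in>vert (Suc (Suc i)). v \<noteq> top_vert (Suc (Suc i)) \<longrightarrow> c v = c' v"
    "c (top_vert (Suc (Suc i))) = x" "c' (top_vert (Suc (Suc i))) = y" and xy: "x \<in> X" "y \<in> X"
    unfolding char_rel_def by blast
  have inv: "\<phi> v \<in> vert (Suc (Suc i))" if "v \<in> vert (Suc i)" for v
    unfolding vert_def
  proof (intro CollectI allI impI)
    fix j assume "\<phi> v j"
    thus "j < Suc (Suc i)"
      using that unfolding phij vert_def by (cases "j = 0") auto
  qed
  have m: "cube_morphism (Suc i) (Suc (Suc i)) \<phi>"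
    unfolding cube_morphism_def
  proof (intro conjI ballI allI impI)
    fix v assume "v \<in> vert (Suc i)" thus "\<phi> v \<in> vert (Suc (Suc i))" by (rule inv)
  next
    fix j assume j: "j < Suc (Suc i)"
    show "\<exists>f. (f = (\<lambda>v. False) \<or> f = (\<lambda>v. True) \<or> (\<exists>ia<Suc i. f = (\<lambda>v. v ia) \<or> f = (\<lambda>v. \<not> v ia))) \<and>
              (\<forall>v\<in>vert (Suc i). \<phi> v j = f v)"
    proof (cases "j = 0")
      case True
      have "\<forall>v\<in>vert (Suc i). \<phi> v j = True" using True by (simp add: phij)
      thus ?thesis by blast
    next
      case False
      have "(\<exists>ia<Suc i. (\<lambda>v. v (j - 1)) = (\<lambda>v. v ia) \<or> (\<lambda>v. v (j - 1)) = (\<lambda>v. \<not> v ia))"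
        using j False by (intro exI[of _ "j - 1"]) simp
      moreover have "\<forall>v\<in>vert (Suc i). \<phi> v j = v (j - 1)" using False by (simp add: phij)
      ultimately show ?thesis by blast
    qed
  qed
  have top: "\<phi> (top_vert (Suc i)) = top_vert (Suc (Suc i))"
  proof
    fix j show "\<phi> (top_vert (Suc i)) j = top_vert (Suc (Suc i)) j"
      unfolding phij top_vert_def by auto
  qed
  have ntop: "\<phi> v \<noteq> top_vert (Suc (Suc i))" if "v \<in> vert (Suc i)" "v \<noteq> top_vert (Suc i)" for v
  proof
    assume a: "\<phi> v = top_vert (Suc (Suc i))"
    have "v m = top_vert (Suc i) m" for m
      using fun_cong[OF a, of "Suc m"] unfolding phij top_vert_def by simp
    hence "v = top_vert (Suc i)" by (rule ext)
    thus False using that by simp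
  qed
  have d: "(\<lambda>v\<in>vert (Suc i). c (\<phi> v)) \<in> C (Suc i)" "(\<lambda>v\<in>vert (Suc i). c' (\<phi> v)) \<in> C (Suc i)"
    using cube_comp[OF N m cc(1)] cube_comp[OF N m cc(2)] by auto
  have agree: "\<forall>v\<in>vert (Suc i). v \<noteq> top_vert (Suc i) \<longrightarrow>
      (\<lambda>v\<in>vert (Suc i). c (\<phi> v)) v = (\<lambda>v\<in>vert (Suc i). c' (\<phi> v)) v"
    using cc(3) inv ntop by simp
  have tops: "(\<lambda>v\<in>vert (Suc i). c (\<phi> v)) (top_vert (Suc i)) = x"
     "(\<lambda>v\<in>vert (Suc i). c' (\<phi> v)) (top_vert (Suc i)) = y"
    using top cc(4,5) by simp_all
  show ?thesis unfolding char_rel_def using xy d agree tops by blast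
qed

lemma proj0: "nilspace X C \<Longrightarrow> x \<in> X \<Longrightarrow> proj X C 0 x = X"
proof -
  assume N: "nilspace X C" and x: "x \<in> X"
  have "char_rel X C 0 x y" if y: "y \<in> X" for y
  proof -
    define c where "c = (\<lambda>v\<in>vert (Suc 0). x)"
    define c' where "c' = (\<lambda>v\<in>vert (Suc 0). if v = top_vert (Suc 0) then y else x)"
    have cc: "c \<in> C (Suc 0)" "c' \<in> C (Suc 0)"
      using C1_all[OF N] x y unfolding c_def c'_def by auto
    have t: "c (top_vert (Suc 0)) = x" "c' (top_vert (Suc 0)) = y"
      unfolding c_def c'_def by simp_all
    have a: "\<forall>v\<in>vert (Suc 0). v \<noteq> top_vert (Suc 0) \<longrightarrow> c v = c' v"
      unfolding c_def c'_def by simp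
    show ?thesis unfolding char_rel_def
      apply (intro conjI x y)
      apply (rule bexI[OF _ cc(1)])
      apply (rule bexI[OF _ cc(2)])
      using a t by blast
  qed
  moreover have "char_rel X C 0 x y \<Longrightarrow> y \<in> X" for y by (drule char_rel_X) simp
  ultimately show ?thesis unfolding proj_def by blast
qed

lemma sg_grp: "structure_group X C i Z dZ act \<Longrightarrow> compact_metric_group Z dZ"
  unfolding structure_group_def by (elim conjE)

lemma sg_closed_raw: "structure_group X C i Z dZ act \<Longrightarrow> \<forall>z\<in>Z. \<forall>A\<in>factor X C i. act z A \<in> factor X C i"
  unfolding structure_group_def by (elim conjE) assumption

lemma sg_closed: "structure_group X C i Z dZ act \<Longrightarrow> z \<in> Z \<Longrightarrow> A \<in> factor X C i \<Longrightarrow> act z A \<in> factor X C i"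
  using sg_closed_raw by blast

lemma sg_zero_raw: "structure_group X C i Z dZ act \<Longrightarrow> \<forall>A\<in>factor X C i. act 0 A = A"
  unfolding structure_group_def by (elim conjE) assumption

lemma sg_zero: "structure_group X C i Z dZ act \<Longrightarrow> A \<in> factor X C i \<Longrightarrow> act 0 A = A"
  using sg_zero_raw by blast

lemma sg_add_raw: "structure_group X C i Z dZ act \<Longrightarrow> \<forall>z\<in>Z. \<forall>w\<in>Z. \<forall>A\<in>factor X C i. act (z + w) A = act z (act w A)"
  unfolding structure_group_def by (elim conjE) assumption

lemma sg_add: "structure_group X C i Z dZ act \<Longrightarrow> z \<in> Z \<Longrightarrow> w \<in> Z \<Longrightarrow> A \<in> factor X C i \<Longrightarrow>
   act (z + w) A = act z (act w A)"
  using sg_add_raw by blast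

lemma sg_free_raw: "structure_group X C i Z dZ act \<Longrightarrow> \<forall>z\<in>Z. \<forall>A\<in>factor X C i. act z A = A \<longrightarrow> z = 0"
  unfolding structure_group_def by (elim conjE) assumption

lemma sg_free: "structure_group X C i Z dZ act \<Longrightarrow> z \<in> Z \<Longrightarrow> A \<in> factor X C i \<Longrightarrow> act z A = A \<Longrightarrow> z = 0"
  using sg_free_raw by blast

lemma sg_orbit_raw: "structure_group X C i Z dZ act \<Longrightarrow> \<forall>a\<in>X. \<forall>b\<in>X. (\<exists>z\<in>Z. act z (proj X C i a) = proj X C i b) \<longleftrightarrow> proj X C (i - 1) a = proj X C (i - 1) b"
  unfolding structure_group_def by (elim conjE) assumption

lemma sg_orbit: "structure_group X C i Z dZ act \<Longrightarrow> a \<in> X \<Longrightarrow> b \<in> X \<Longrightarrow>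
   (\<exists>z\<in>Z. act z (proj X C i a) = proj X C i b) \<longleftrightarrow> proj X C (i - 1) a = proj X C (i - 1) b"
  using sg_orbit_raw by blast

lemma sg_cont: "structure_group X C i Z dZ act \<Longrightarrow>
   continuous_map (prod_topology (Metric_space.mtopology Z dZ) (factor_top X C i))
        (factor_top X C i) (\<lambda>(z, A). act z A)"
  unfolding structure_group_def by (elim conjE)

lemma sg_cube_raw: "structure_group X C i Z dZ act \<Longrightarrow> \<forall>n. \<forall>c\<in>C n. \<forall>g\<in>vert n \<rightarrow>\<^sub>E Z. (\<lambda>v\<in>vert n. act (g v) (proj X C i (c v))) \<in> factor_cubes X C i n \<longleftrightarrow> g \<in> D_cubes Z i n"
  unfolding structure_group_def by (elim conjE) assumption

lemma sg_cube: "structure_group X C i Z dZ act \<Longrightarrow> c \<in> C n \<Longrightarrow> g \<in> vert n \<rightarrow>\<^sub>E Z \<Longrightarrow>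
        (\<lambda>v\<in>vert n. act (g v) (proj X C i (c v))) \<in> factor_cubes X C i n
          \<longleftrightarrow> g \<in> D_cubes Z i n"
  using sg_cube_raw by blast

lemma cmg_sub: "compact_metric_group Z dZ \<Longrightarrow> is_subgroup_add Z"
  unfolding compact_metric_group_def by (elim conjE)

lemma cmg_metric: "compact_metric_group Z dZ \<Longrightarrow> Metric_space Z dZ"
  unfolding compact_metric_group_def by (elim conjE)

lemma cmg_compact: "compact_metric_group Z dZ \<Longrightarrow> compact_space (Metric_space.mtopology Z dZ)"
  unfolding compact_metric_group_def by (elim conjE)

lemma cmg_add: "compact_metric_group Z dZ \<Longrightarrow>
   continuous_map (prod_topology (Metric_space.mtopology Z dZ) (Metric_space.mtopology Z dZ))
        (Metric_space.mtopology Z dZ) (\<lambda>(a, b). a + b)"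
  unfolding compact_metric_group_def by (elim conjE)

lemma sub0: "is_subgroup_add Z \<Longrightarrow> 0 \<in> Z" unfolding is_subgroup_add_def by blast
lemma subadd: "is_subgroup_add Z \<Longrightarrow> a \<in> Z \<Longrightarrow> b \<in> Z \<Longrightarrow> a + b \<in> Z" unfolding is_subgroup_add_def by blast
lemma subneg: "is_subgroup_add Z \<Longrightarrow> a \<in> Z \<Longrightarrow> - a \<in> Z" unfolding is_subgroup_add_def by blast

lemma sg_Z0: "structure_group X C i Z dZ act \<Longrightarrow> 0 \<in> Z"
  by (rule sub0[OF cmg_sub[OF sg_grp]])

lemma sg_unique:
  assumes S: "structure_group X C i Z dZ act" and z: "z \<in> Z" and w: "w \<in> Z" and A: "A \<in> factor X C i"
    and e: "act z A = act w A"
  shows "z = w"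
proof -
  have G: "is_subgroup_add Z" by (rule cmg_sub[OF sg_grp[OF S]])
  have nw: "- w \<in> Z" by (rule subneg[OF G w])
  have "act (- w + z) A = act (- w) (act z A)" by (rule sg_add[OF S nw z A])
  also have "\<dots> = act (- w) (act w A)" using e by simp
  also have "\<dots> = act (- w + w) A" by (rule sg_add[OF S nw w A, symmetric])
  also have "\<dots> = A" using sg_zero[OF S A] by simp
  finally have "- w + z = 0" by (rule sg_free[OF S subadd[OF G nw z] A])
  thus ?thesis by (simp add: add.commute)
qed

lemma proj_in_factor: "a \<in> X \<Longrightarrow> proj X C i a \<in> factor X C i"
  unfolding factor_def by blast

lemma top_only_D:
  assumes "(\<lambda>v\<in>vert (Suc i). if v = top_vert (Suc i) then z else 0) \<in> D_cubes Z i (Suc i)"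
  shows "z = (0::'z::ab_group_add)"
proof -
  define g where "g = (\<lambda>v\<in>vert (Suc i). if v = top_vert (Suc i) then z else (0::'z))"
  define F where "F = (\<lambda>v. if even (card {j. j < Suc i \<and> v j}) then g v else - g v)"
  have "(\<Sum>v\<in>{v\<in>vert (Suc i). \<forall>j<Suc i. j \<notin> {..<Suc i} \<longrightarrow> v j = top_vert (Suc i) j}. F v) = 0"
    using assms unfolding D_cubes_def g_def F_def by (elim CollectE conjE) (erule allE[of _ "{..<Suc i}"], erule allE[of _ "top_vert (Suc i)"], simp)
  moreover have "{v\<in>vert (Suc i). \<forall>j<Suc i. j \<notin> {..<Suc i} \<longrightarrow> v j = top_vert (Suc i) j} = vert (Suc i)"
    by auto
  ultimately have s: "(\<Sum>v\<in>vert (Suc i). F v) = 0" by simp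
  have "(\<Sum>v\<in>vert (Suc i). F v) = F (top_vert (Suc i)) + (\<Sum>v\<in>vert (Suc i) - {top_vert (Suc i)}. F v)"
    by (rule sum.remove[OF finite_vert top_vert_in])
  moreover have "(\<Sum>v\<in>vert (Suc i) - {top_vert (Suc i)}. F v) = 0"
    by (rule sum.neutral) (simp add: F_def g_def)
  ultimately have "F (top_vert (Suc i)) = 0" using s by simp
  thus ?thesis unfolding F_def g_def by (simp split: if_splits)
qed

lemma proj_eq:
  assumes N: "nilspace X C"
    and S: "\<forall>j\<in>{1..i}. structure_group X C j (Z j) (dZ j) (act j)"
    and R: "char_rel X C i x y"
  shows "proj X C i x = proj X C i y"
  using S R
proof (induction i arbitrary: x y)
  case 0
  then show ?case using proj0[OF N] char_rel_X[OF "0.prems"(2)] by simp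
next
  case (Suc i)
  have S1: "structure_group X C (Suc i) (Z (Suc i)) (dZ (Suc i)) (act (Suc i))"
    using Suc.prems(1) by simp
  have Si: "\<forall>j\<in>{1..i}. structure_group X C j (Z j) (dZ j) (act j)" using Suc.prems(1) by simp
  have xy: "x \<in> X" "y \<in> X" using char_rel_X[OF Suc.prems(2)] by auto
  have "proj X C i x = proj X C i y"
    by (rule Suc.IH[OF Si char_rel_down[OF N Suc.prems(2)]])
  then obtain z where z: "z \<in> Z (Suc i)" "act (Suc i) z (proj X C (Suc i) x) = proj X C (Suc i) y"
    using sg_orbit[OF S1 xy] by auto
  from Suc.prems(2) obtain c c' where cc: "c \<in> C (Suc (Suc i))" "c' \<in> C (Suc (Suc i))"
    "\<forall>v\<in>vert (Suc (Suc i)). v \<noteq> top_vert (Suc (Suc i)) \<longrightarrow> c v = c' v"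
    "c (top_vert (Suc (Suc i))) = x" "c' (top_vert (Suc (Suc i))) = y"
    unfolding char_rel_def by blast
  define g where "g = (\<lambda>v\<in>vert (Suc (Suc i)). if v = top_vert (Suc (Suc i)) then z else 0)"
  have g: "g \<in> vert (Suc (Suc i)) \<rightarrow>\<^sub>E Z (Suc i)"
    using z(1) sg_Z0[OF S1] unfolding g_def by auto
  have cX: "c v \<in> X" if "v \<in> vert (Suc (Suc i))" for v
    using nil_cube[OF N cc(1)] that by auto
  have eq: "(\<lambda>v\<in>vert (Suc (Suc i)). act (Suc i) (g v) (proj X C (Suc i) (c v)))
        = (\<lambda>v\<in>vert (Suc (Suc i)). proj X C (Suc i) (c' v))"
  proof (rule restrict_ext)
    fix v assume v: "v \<in> vert (Suc (Suc i))"
    show "act (Suc i) (g v) (proj X C (Suc i) (c v)) = proj X C (Suc i) (c' v)"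
    proof (cases "v = top_vert (Suc (Suc i))")
      case True thus ?thesis using z(2) cc(4,5) v unfolding g_def by simp
    next
      case False
      hence "act (Suc i) (g v) (proj X C (Suc i) (c v)) = proj X C (Suc i) (c v)"
        using v sg_zero[OF S1 proj_in_factor[OF cX[OF v]]] unfolding g_def by simp
      thus ?thesis using cc(3) v False by simp
    qed
  qed
  have "(\<lambda>v\<in>vert (Suc (Suc i)). proj X C (Suc i) (c' v)) \<in> factor_cubes X C (Suc i) (Suc (Suc i))"
    unfolding factor_cubes_def using cc(2) by blast
  hence "g \<in> D_cubes (Z (Suc i)) (Suc i) (Suc (Suc i))"
    using sg_cube[OF S1 cc(1) g] eq by simp
  hence "z = 0" unfolding g_def by (rule top_only_D)
  thus ?case using z(2) sg_zero[OF S1 proj_in_factor[OF xy(1)]] by simp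
qed

lemma proj_eq_iff:
  assumes N: "nilspace X C"
    and S: "\<forall>j\<in>{1..i}. structure_group X C j (Z j) (dZ j) (act j)"
    and x: "x \<in> X" and y: "y \<in> X"
  shows "proj X C i x = proj X C i y \<longleftrightarrow> char_rel X C i x y"
proof
  assume "proj X C i x = proj X C i y"
  moreover have "y \<in> proj X C i y" unfolding proj_def using char_rel_refl[OF N y] by simp
  ultimately have "y \<in> proj X C i x" by simp
  thus "char_rel X C i x y" unfolding proj_def by simp
qed (rule proj_eq[OF N S])

section \<open>Quotient topology\<close>

lemma istopology_quot: "istopology (\<lambda>U. U \<subseteq> f ` topspace T \<and> openin T {x \<in> topspace T. f x \<in> U})"
proof -
  have h1: "S \<inter> U \<subseteq> f ` topspace T \<and> openin T {x \<in> topspace T. f x \<in> S \<inter> U}"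
    if a: "S \<subseteq> f ` topspace T \<and> openin T {x \<in> topspace T. f x \<in> S}"
     and b: "U \<subseteq> f ` topspace T \<and> openin T {x \<in> topspace T. f x \<in> U}" for S U
  proof -
    have "{x \<in> topspace T. f x \<in> S \<inter> U} = {x \<in> topspace T. f x \<in> S} \<inter> {x \<in> topspace T. f x \<in> U}" by auto
    thus ?thesis using a b by auto
  qed
  have h2: "\<Union>K \<subseteq> f ` topspace T \<and> openin T {x \<in> topspace T. f x \<in> \<Union>K}"
    if a: "\<forall>U\<in>K. U \<subseteq> f ` topspace T \<and> openin T {x \<in> topspace T. f x \<in> U}" for K
  proof -
    have "{x \<in> topspace T. f x \<in> \<Union>K} = \<Union>((\<lambda>U. {x \<in> topspace T. f x \<in> U}) ` K)" by auto
    moreover have "openin T (\<Union>((\<lambda>U. {x \<in> topspace T. f x \<in> U}) ` K))" using a by auto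
    ultimately show ?thesis using a by auto
  qed
  show ?thesis unfolding istopology_def using h1 h2 by blast
qed

lemma openin_quot: "openin (quotient_top T f) U \<longleftrightarrow> U \<subseteq> f ` topspace T \<and> openin T {x \<in> topspace T. f x \<in> U}"
  unfolding quotient_top_def using istopology_quot[of f T] by simp

lemma topspace_quot: "topspace (quotient_top T f) = f ` topspace T"
proof -
  have "openin (quotient_top T f) (f ` topspace T)"
  proof -
    have "{x \<in> topspace T. f x \<in> f ` topspace T} = topspace T" by auto
    thus ?thesis unfolding openin_quot by simp
  qed
  hence "f ` topspace T \<subseteq> topspace (quotient_top T f)" by (rule openin_subset)
  moreover have "topspace (quotient_top T f) \<subseteq> f ` topspace T"
    unfolding topspace_def openin_quot by blast
  ultimately show ?thesis by blast
qed

lemma closedin_quot: "closedin (quotient_top T f) S \<longleftrightarrow> S \<subseteq> f ` topspace T \<and> closedin T {x \<in> topspace T. f x \<in> S}"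
proof -
  have e: "{x \<in> topspace T. f x \<in> f ` topspace T - S} = topspace T - {x \<in> topspace T. f x \<in> S}" by auto
  show ?thesis unfolding closedin_def topspace_quot openin_quot e by auto
qed

lemma continuous_map_quot: "continuous_map T (quotient_top T f) f"
  unfolding continuous_map_def topspace_quot openin_quot
proof (intro conjI allI impI)
  show "f \<in> topspace T \<rightarrow> f ` topspace T" by auto
next
  fix U assume "U \<subseteq> f ` topspace T \<and> openin T {x \<in> topspace T. f x \<in> U}"
  thus "openin T {x \<in> topspace T. f x \<in> U}" by blast
qed

lemma topspace_factor_top: "topspace (factor_top X C i) = factor X C i"
  unfolding factor_top_def factor_def topspace_quot by simp

lemma openin_factor_top: "openin (factor_top X C i) U \<longleftrightarrow> U \<subseteq> factor X C i \<and> openin (top_of_set X) {x \<in> X. proj X C i x \<in> U}"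
  unfolding factor_top_def factor_def openin_quot by simp

lemma closedin_factor_top: "closedin (factor_top X C i) U \<longleftrightarrow> U \<subseteq> factor X C i \<and> closedin (top_of_set X) {x \<in> X. proj X C i x \<in> U}"
  unfolding factor_top_def factor_def closedin_quot by simp

lemma continuous_proj: "continuous_map (top_of_set X) (factor_top X C i) (proj X C i)"
  unfolding factor_top_def using continuous_map_quot[of "top_of_set X" "proj X C i"] by simp

section \<open>Compactness of the characteristic relation\<close>

lemma compact_space_XT: "compact X \<Longrightarrow> compact_space (top_of_set X)"
  by (rule compact_space_subtopology) simp

lemma Hausdorff_XT: "Hausdorff_space (top_of_set (X::'a::metric_space set))"
  by (rule Hausdorff_space_subtopology) simp

lemma rel_compact:
  fixes X :: "'a::metric_space set"
  assumes Cl: "closedin (product_topology (\<lambda>_. top_of_set X) (vert n)) (C n)" and K: "compact X"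
  shows "compactin (prod_topology (top_of_set X) (top_of_set X))
     ((\<lambda>p. (fst p (top_vert n), snd p (top_vert n))) ` ((C n \<times> C n) \<inter>
        {p \<in> topspace (prod_topology (product_topology (\<lambda>_. top_of_set X) (vert n)) (product_topology (\<lambda>_. top_of_set X) (vert n))).
           restrict (fst p) (vert n - {top_vert n}) = restrict (snd p) (vert n - {top_vert n})}))"
proof -
  define PT where "PT = product_topology (\<lambda>_. top_of_set X) (vert n)"
  define V where "V = vert n - {top_vert n}"
  have cPT: "compact_space PT" unfolding PT_def
    using compact_space_product_topology compact_space_XT[OF K] by blast
  have cC: "compactin PT (C n)" using closedin_compact_space[OF cPT] Cl unfolding PT_def by blast
  have cCC: "compactin (prod_topology PT PT) (C n \<times> C n)" using cC compactin_Times by blast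
  have HV: "Hausdorff_space (product_topology (\<lambda>_. top_of_set X) V)"
    using Hausdorff_space_product_topology Hausdorff_XT by blast
  have cont1: "continuous_map (prod_topology PT PT) (top_of_set X) (\<lambda>p. g p k)"
    if k: "k \<in> vert n" and g: "g = fst \<or> g = snd" for k and g :: "_ \<Rightarrow> (nat \<Rightarrow> bool) \<Rightarrow> 'a"
  proof -
    have pk: "continuous_map PT (top_of_set X) (\<lambda>x. x k)" unfolding PT_def
      by (rule continuous_map_product_projection[OF k])
    show ?thesis using g
    proof
      assume "g = fst" thus ?thesis using continuous_map_compose[OF continuous_map_fst pk] by (simp add: o_def)
    next
      assume "g = snd" thus ?thesis using continuous_map_compose[OF continuous_map_snd pk] by (simp add: o_def)
    qed
  qed
  have contr: "continuous_map (prod_topology PT PT) (product_topology (\<lambda>_. top_of_set X) V) (\<lambda>p. restrict (g p) V)"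
    if g: "g = fst \<or> g = snd" for g :: "_ \<Rightarrow> (nat \<Rightarrow> bool) \<Rightarrow> 'a"
    unfolding continuous_map_componentwise
  proof (intro conjI ballI)
    show "(\<lambda>p. restrict (g p) V) ` topspace (prod_topology PT PT) \<subseteq> extensional V" by auto
  next
    fix k assume k: "k \<in> V"
    hence "k \<in> vert n" unfolding V_def by simp
    from cont1[OF this g] show "continuous_map (prod_topology PT PT) (top_of_set X) (\<lambda>x. restrict (g x) V k)"
      using k by simp
  qed
  have clA: "closedin (prod_topology PT PT) {p \<in> topspace (prod_topology PT PT). restrict (fst p) V = restrict (snd p) V}"
    by (rule closedin_continuous_maps_eq[OF HV contr contr]) simp_all
  have cE: "compactin (prod_topology PT PT) ((C n \<times> C n) \<inter> {p \<in> topspace (prod_topology PT PT). restrict (fst p) V = restrict (snd p) V})"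
    by (rule compact_Int_closedin[OF cCC clA])
  have ch: "continuous_map (prod_topology PT PT) (prod_topology (top_of_set X) (top_of_set X))
      (\<lambda>p. (fst p (top_vert n), snd p (top_vert n)))"
    by (intro continuous_map_pairedI cont1) simp_all
  show ?thesis using image_compactin[OF cE ch] unfolding PT_def V_def .
qed

lemma rel_eq_compact:
  fixes X :: "'a::metric_space set"
  assumes N: "nilspace X C"
    and Cl: "closedin (product_topology (\<lambda>_. top_of_set X) (vert (Suc i))) (C (Suc i))" and K: "compact X"
    and S: "\<forall>j\<in>{1..i}. structure_group X C j (Z j) (dZ j) (act j)"
  shows "compactin (prod_topology (top_of_set X) (top_of_set X)) {p \<in> X \<times> X. proj X C i (fst p) = proj X C i (snd p)}"
proof -
  define n where "n = Suc i"
  define PT where "PT = product_topology (\<lambda>_. top_of_set X) (vert n)"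
  define V where "V = vert n - {top_vert n}"
  have sub: "C n \<subseteq> topspace PT" using closedin_subset[OF Cl] unfolding PT_def n_def .
  have "{p \<in> X \<times> X. proj X C i (fst p) = proj X C i (snd p)} =
     (\<lambda>p. (fst p (top_vert n), snd p (top_vert n))) ` ((C n \<times> C n) \<inter>
        {p \<in> topspace (prod_topology PT PT). restrict (fst p) V = restrict (snd p) V})"
  proof (intro equalityI subsetI)
    fix p assume p: "p \<in> {p \<in> X \<times> X. proj X C i (fst p) = proj X C i (snd p)}"
    obtain x y where pxy: "p = (x, y)" by (cases p)
    have xy: "x \<in> X" "y \<in> X" using p pxy by auto
    have "char_rel X C i x y" using proj_eq_iff[OF N S xy] p pxy by simp
    then obtain c c' where cc: "c \<in> C n" "c' \<in> C n"
      "\<forall>v\<in>vert n. v \<noteq> top_vert n \<longrightarrow> c v = c' v"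
      "c (top_vert n) = x" "c' (top_vert n) = y"
      unfolding char_rel_def n_def by blast
    have "restrict c V = restrict c' V" using cc(3) unfolding V_def by (intro restrict_ext) auto
    hence "(c, c') \<in> (C n \<times> C n) \<inter> {p \<in> topspace (prod_topology PT PT). restrict (fst p) V = restrict (snd p) V}"
      using cc(1,2) sub by auto
    moreover have "p = (\<lambda>p. (fst p (top_vert n), snd p (top_vert n))) (c, c')" using cc(4,5) pxy by simp
    ultimately show "p \<in> (\<lambda>p. (fst p (top_vert n), snd p (top_vert n))) ` ((C n \<times> C n) \<inter>
        {p \<in> topspace (prod_topology PT PT). restrict (fst p) V = restrict (snd p) V})" by blast
  next
    fix p assume "p \<in> (\<lambda>p. (fst p (top_vert n), snd p (top_vert n))) ` ((C n \<times> C n) \<inter>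
        {p \<in> topspace (prod_topology PT PT). restrict (fst p) V = restrict (snd p) V})"
    then obtain c c' where cc: "c \<in> C n" "c' \<in> C n" "restrict c V = restrict c' V"
      and pe: "p = (c (top_vert n), c' (top_vert n))" by auto
    have ag: "\<forall>v\<in>vert n. v \<noteq> top_vert n \<longrightarrow> c v = c' v"
    proof (intro ballI impI)
      fix v assume "v \<in> vert n" "v \<noteq> top_vert n"
      hence "v \<in> V" unfolding V_def by simp
      thus "c v = c' v" using fun_cong[OF cc(3), of v] by simp
    qed
    have X1: "c (top_vert n) \<in> X" "c' (top_vert n) \<in> X"
      using nil_cube[OF N cc(1)] nil_cube[OF N cc(2)] by auto
    have "char_rel X C i (c (top_vert n)) (c' (top_vert n))"
      unfolding char_rel_def using X1 cc(1,2) ag unfolding n_def by blast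
    hence "proj X C i (c (top_vert n)) = proj X C i (c' (top_vert n))"
      using proj_eq_iff[OF N S X1] by simp
    thus "p \<in> {p \<in> X \<times> X. proj X C i (fst p) = proj X C i (snd p)}" using pe X1 by simp
  qed
  thus ?thesis using rel_compact[of X "Suc i" C, OF Cl K] unfolding PT_def V_def n_def by simp
qed

lemma sat_closed:
  fixes X :: "'a::metric_space set"
  assumes N: "nilspace X C"
    and Cl: "closedin (product_topology (\<lambda>_. top_of_set X) (vert (Suc i))) (C (Suc i))" and K: "compact X"
    and S: "\<forall>j\<in>{1..i}. structure_group X C j (Z j) (dZ j) (act j)"
    and T: "closedin (top_of_set X) T"
  shows "closedin (top_of_set X) {y \<in> X. \<exists>s\<in>T. proj X C i s = proj X C i y}"
proof -
  define R where "R = {p \<in> X \<times> X. proj X C i (fst p) = proj X C i (snd p)}"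
  have cR: "compactin (prod_topology (top_of_set X) (top_of_set X)) R"
    unfolding R_def by (rule rel_eq_compact[OF N Cl K S])
  have cT: "closedin (prod_topology (top_of_set X) (top_of_set X)) (T \<times> X)"
    using T closedin_prod_Times_iff[of "top_of_set X" "top_of_set X" T X] by (simp del: prod_topology_subtopology_eu)
  have "compactin (prod_topology (top_of_set X) (top_of_set X)) (R \<inter> (T \<times> X))"
    by (rule compact_Int_closedin[OF cR cT])
  hence "compactin (top_of_set X) (snd ` (R \<inter> (T \<times> X)))"
    using image_compactin continuous_map_snd by blast
  hence "closedin (top_of_set X) (snd ` (R \<inter> (T \<times> X)))"
    by (rule compactin_imp_closedin[OF Hausdorff_XT])
  moreover have "snd ` (R \<inter> (T \<times> X)) = {y \<in> X. \<exists>s\<in>T. proj X C i s = proj X C i y}"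
  proof (intro equalityI subsetI)
    fix y assume "y \<in> snd ` (R \<inter> (T \<times> X))"
    then obtain p where "p \<in> R" "p \<in> T \<times> X" "y = snd p" by blast
    thus "y \<in> {y \<in> X. \<exists>s\<in>T. proj X C i s = proj X C i y}" unfolding R_def by (cases p) auto
  next
    fix y assume "y \<in> {y \<in> X. \<exists>s\<in>T. proj X C i s = proj X C i y}"
    then obtain s where "y \<in> X" "s \<in> T" "proj X C i s = proj X C i y" by blast
    moreover have "s \<in> X" using closedin_subset[OF T] \<open>s \<in> T\<close> by auto
    ultimately have "(s, y) \<in> R \<inter> (T \<times> X)" unfolding R_def by simp
    thus "y \<in> snd ` (R \<inter> (T \<times> X))" by force
  qed
  ultimately show ?thesis by simp
qed

lemma factor_Hausdorff:
  fixes X :: "'a::metric_space set"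
  assumes N: "nilspace X C"
    and Cl: "closedin (product_topology (\<lambda>_. top_of_set X) (vert (Suc i))) (C (Suc i))" and K: "compact X"
    and S: "\<forall>j\<in>{1..i}. structure_group X C j (Z j) (dZ j) (act j)"
  shows "Hausdorff_space (factor_top X C i)"
  unfolding Hausdorff_space_def topspace_factor_top
proof (intro allI impI, elim conjE)
  fix B1 B2 assume B1: "B1 \<in> factor X C i" and B2: "B2 \<in> factor X C i" and ne: "B1 \<noteq> B2"
  obtain x1 where x1: "x1 \<in> X" "B1 = proj X C i x1" using B1 unfolding factor_def by blast
  obtain x2 where x2: "x2 \<in> X" "B2 = proj X C i x2" using B2 unfolding factor_def by blast
  define sat where "sat T = {y \<in> X. \<exists>s\<in>T. proj X C i s = proj X C i y}" for T
  have satc: "closedin (top_of_set X) (sat T)" if "closedin (top_of_set X) T" for T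
    unfolding sat_def by (rule sat_closed[OF N Cl K S that])
  have sing: "closedin (top_of_set X) {x}" if "x \<in> X" for x
    unfolding closedin_closed using that by (intro exI[of _ "{x}"]) auto
  define K1 where "K1 = sat {x1}"
  define K2 where "K2 = sat {x2}"
  have cK: "closedin (top_of_set X) K1" "closedin (top_of_set X) K2"
    unfolding K1_def K2_def using satc sing x1(1) x2(1) by auto
  have dK: "disjnt K1 K2" using ne x1 x2 unfolding K1_def K2_def sat_def disjnt_def by auto
  have NS: "normal_space (top_of_set X)"
    using compact_Hausdorff_or_regular_imp_normal_space compact_space_XT[OF K] Hausdorff_XT by blast
  obtain U1 U2 where U: "openin (top_of_set X) U1" "openin (top_of_set X) U2" "K1 \<subseteq> U1" "K2 \<subseteq> U2" "disjnt U1 U2"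
    using NS[unfolded normal_space_def, rule_format, OF conjI[OF cK(1) conjI[OF cK(2) dK]]] by blast
  define U1' where "U1' = X - sat (X - U1)"
  define U2' where "U2' = X - sat (X - U2)"
  have oU': "openin (top_of_set X) U1'" "openin (top_of_set X) U2'"
  proof -
    have "openin (top_of_set X) (X - sat (X - U))" if "openin (top_of_set X) U" for U
    proof -
      have "closedin (top_of_set X) (X - U)"
        using closedin_diff[OF closedin_topspace[of "top_of_set X"] that] by simp
      hence "closedin (top_of_set X) (sat (X - U))" by (rule satc)
      thus ?thesis using openin_diff[OF openin_topspace[of "top_of_set X"]] by simp
    qed
    thus "openin (top_of_set X) U1'" "openin (top_of_set X) U2'" unfolding U1'_def U2'_def using U(1,2) by auto
  qed
  have sat_X: "sat T \<subseteq> X" for T unfolding sat_def by auto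
  have pre: "{x \<in> X. proj X C i x \<in> proj X C i ` (X - sat (X - U))} = X - sat (X - U)" for U
  proof (intro equalityI subsetI)
    fix x assume "x \<in> {x \<in> X. proj X C i x \<in> proj X C i ` (X - sat (X - U))}"
    then obtain u where xu: "x \<in> X" "u \<in> X - sat (X - U)" "proj X C i x = proj X C i u" by blast
    show "x \<in> X - sat (X - U)"
    proof (rule ccontr)
      assume "x \<notin> X - sat (X - U)"
      then obtain s where "s \<in> X - U" "proj X C i s = proj X C i x" using xu(1) unfolding sat_def by blast
      hence "u \<in> sat (X - U)" using xu unfolding sat_def by auto
      thus False using xu(2) by simp
    qed
  qed auto
  have oV: "openin (factor_top X C i) (proj X C i ` U1')" "openin (factor_top X C i) (proj X C i ` U2')"
    unfolding openin_factor_top U1'_def U2'_def pre using oU' unfolding U1'_def U2'_def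
    by (auto simp: factor_def)
  have inU': "x \<in> X - sat (X - U)" if "x \<in> X" "sat {x} \<subseteq> U" for x U
  proof (rule ccontr)
    assume "x \<notin> X - sat (X - U)"
    hence "x \<in> sat (X - U)" using that(1) by simp
    then obtain s where "s \<in> X - U" "proj X C i s = proj X C i x" unfolding sat_def by blast
    hence "s \<in> sat {x}" unfolding sat_def by auto
    thus False using that(2) \<open>s \<in> X - U\<close> by auto
  qed
  have m1: "B1 \<in> proj X C i ` U1'" using inU'[OF x1(1)] U(3) x1 unfolding K1_def U1'_def by blast
  have m2: "B2 \<in> proj X C i ` U2'" using inU'[OF x2(1)] U(4) x2 unfolding K2_def U2'_def by blast
  have inU: "u \<in> U" if "u \<in> X - sat (X - U)" for u U
  proof (rule ccontr)
    assume "u \<notin> U"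
    hence "u \<in> sat (X - U)" using that unfolding sat_def by auto
    thus False using that by simp
  qed
  have dV: "disjnt (proj X C i ` U1') (proj X C i ` U2')"
    unfolding disjnt_def
  proof (rule ccontr)
    assume "proj X C i ` U1' \<inter> proj X C i ` U2' \<noteq> {}"
    then obtain u1 u2 where u: "u1 \<in> U1'" "u2 \<in> U2'" "proj X C i u1 = proj X C i u2" by blast
    have "u2 \<in> U2" using inU u(2) unfolding U2'_def by blast
    hence "u2 \<in> X - U1" using U(5) u(2) unfolding disjnt_def U2'_def by auto
    hence "u1 \<in> sat (X - U1)" using u(1,3) unfolding sat_def U1'_def by auto
    thus False using u(1) unfolding U1'_def by simp
  qed
  show "\<exists>U V. openin (factor_top X C i) U \<and> openin (factor_top X C i) V \<and> B1 \<in> U \<and> B2 \<in> V \<and> disjnt U V"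
    using oV m1 m2 dV by blast
qed

section \<open>The fibre isomorphisms\<close>

lemma fiber_mem: "B \<in> fiber X C i y \<longleftrightarrow> (\<exists>a\<in>X. proj X C (i - 1) a = y \<and> B = proj X C i a)"
  unfolding fiber_def by blast

lemma fiber_sub: "fiber X C i y \<subseteq> factor X C i"
  unfolding fiber_def factor_def by blast

lemma psi_props:
  fixes X :: "'a::metric_space set"
  assumes S1: "structure_group X C i Zi dZi acti"
    and a0: "a0 \<in> X"
    and B: "B \<in> fiber X C i (proj X C (i - 1) a0)"
  shows "(SOME z. z \<in> Zi \<and> acti z (proj X C i a0) = B) \<in> Zi \<and>
         acti (SOME z. z \<in> Zi \<and> acti z (proj X C i a0) = B) (proj X C i a0) = B"
proof -
  obtain a where a: "a \<in> X" "proj X C (i - 1) a = proj X C (i - 1) a0" "B = proj X C i a"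
    using B unfolding fiber_mem by blast
  have "\<exists>z\<in>Zi. acti z (proj X C i a0) = proj X C i a" using sg_orbit[OF S1 a0 a(1)] a(2) by simp
  hence "\<exists>z. z \<in> Zi \<and> acti z (proj X C i a0) = B" using a(3) by blast
  thus ?thesis by (rule someI_ex)
qed

lemma psi_unique:
  fixes X :: "'a::metric_space set"
  assumes S1: "structure_group X C i Zi dZi acti"
    and a0: "a0 \<in> X" and z: "z \<in> Zi"
  shows "(SOME w. w \<in> Zi \<and> acti w (proj X C i a0) = acti z (proj X C i a0)) = z"
proof (rule some_equality)
  show "z \<in> Zi \<and> acti z (proj X C i a0) = acti z (proj X C i a0)" using z by simp
next
  fix w assume "w \<in> Zi \<and> acti w (proj X C i a0) = acti z (proj X C i a0)"
  thus "w = z" using sg_unique[OF S1 _ z proj_in_factor[OF a0]] by blast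
qed

lemma zeta_in_fiber:
  fixes X :: "'a::metric_space set"
  assumes S1: "structure_group X C i Zi dZi acti"
    and a0: "a0 \<in> X" and z: "z \<in> Zi"
  shows "acti z (proj X C i a0) \<in> fiber X C i (proj X C (i - 1) a0)"
proof -
  have "acti z (proj X C i a0) \<in> factor X C i" by (rule sg_closed[OF S1 z proj_in_factor[OF a0]])
  then obtain a where a: "a \<in> X" "acti z (proj X C i a0) = proj X C i a" unfolding factor_def by blast
  have "proj X C (i - 1) a0 = proj X C (i - 1) a" using sg_orbit[OF S1 a0 a(1)] a(2) z by blast
  thus ?thesis unfolding fiber_mem using a by auto
qed

lemma fiber_iso_construct:
  fixes X :: "'a::metric_space set"
  assumes N: "nilspace X C"
    and Cl: "closedin (product_topology (\<lambda>_. top_of_set X) (vert (Suc i))) (C (Suc i))" and K: "compact X"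
    and S: "\<forall>j\<in>{1..i}. structure_group X C j (Z j) (dZ j) (act j)"
    and S1: "structure_group X C i Zi dZi acti"
    and a0: "a0 \<in> X"
  shows "fiber_iso X C i (proj X C (i - 1) a0) Zi dZi (\<lambda>B. SOME z. z \<in> Zi \<and> acti z (proj X C i a0) = B)"
proof -
  define y where "y = proj X C (i - 1) a0"
  define A0 where "A0 = proj X C i a0"
  define \<psi> where "\<psi> = (\<lambda>B. SOME z. z \<in> Zi \<and> acti z A0 = B)"
  define \<zeta> where "\<zeta> = (\<lambda>z. acti z A0)"
  define ZT where "ZT = Metric_space.mtopology Zi dZi"
  define F where "F = factor_top X C i"
  have G: "compact_metric_group Zi dZi" by (rule sg_grp[OF S1])
  have tZ: "topspace ZT = Zi" unfolding ZT_def using Metric_space.topspace_mtopology[OF cmg_metric[OF G]] .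
  have A0F: "A0 \<in> factor X C i" unfolding A0_def by (rule proj_in_factor[OF a0])
  have psi1: "\<psi> B \<in> Zi" "\<zeta> (\<psi> B) = B" if "B \<in> fiber X C i y" for B
    using psi_props[OF S1 a0 that[unfolded y_def]] unfolding \<psi>_def \<zeta>_def A0_def by auto
  have psi2: "\<psi> (\<zeta> z) = z" if "z \<in> Zi" for z
    using psi_unique[OF S1 a0 that] unfolding \<psi>_def \<zeta>_def A0_def .
  have zf: "\<zeta> z \<in> fiber X C i y" if "z \<in> Zi" for z
    using zeta_in_fiber[OF S1 a0 that] unfolding \<zeta>_def A0_def y_def .
  have tsub: "topspace (subtopology F (fiber X C i y)) = fiber X C i y"
    unfolding F_def using fiber_sub[of X C i y] by (simp add: topspace_factor_top Int_absorb1)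
  have czF: "continuous_map ZT F \<zeta>"
  proof -
    have "continuous_map ZT (prod_topology ZT F) (\<lambda>z. (z, A0))"
      by (intro continuous_map_pairedI) (simp_all add: F_def topspace_factor_top A0F)
    from continuous_map_compose[OF this sg_cont[OF S1, folded ZT_def F_def]]
    show ?thesis unfolding \<zeta>_def ZT_def F_def by (simp add: o_def)
  qed
  have cz: "continuous_map ZT (subtopology F (fiber X C i y)) \<zeta>"
    unfolding continuous_map_in_subtopology using czF zf tZ by auto
  have H: "Hausdorff_space (subtopology F (fiber X C i y))"
    unfolding F_def by (rule Hausdorff_space_subtopology[OF factor_Hausdorff[OF N Cl K S]])
  have img: "\<zeta> ` topspace ZT = topspace (subtopology F (fiber X C i y))"
  proof
    show "\<zeta> ` topspace ZT \<subseteq> topspace (subtopology F (fiber X C i y))" using zf tZ tsub by auto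
    show "topspace (subtopology F (fiber X C i y)) \<subseteq> \<zeta> ` topspace ZT"
    proof
      fix B assume "B \<in> topspace (subtopology F (fiber X C i y))"
      hence "B \<in> fiber X C i y" using tsub by simp
      thus "B \<in> \<zeta> ` topspace ZT" using psi1[of B] tZ by (metis imageI)
    qed
  qed
  have inj: "inj_on \<zeta> (topspace ZT)"
    using psi2 tZ by (metis inj_onI)
  have hz: "homeomorphic_map ZT (subtopology F (fiber X C i y)) \<zeta>"
    by (rule continuous_imp_homeomorphic_map[OF cz _ H img inj]) (simp add: ZT_def cmg_compact[OF G])
  then obtain g where g: "homeomorphic_maps ZT (subtopology F (fiber X C i y)) \<zeta> g"
    using homeomorphic_map_maps by blast
  have gpsi: "g B = \<psi> B" if "B \<in> topspace (subtopology F (fiber X C i y))" for B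
  proof -
    have B: "B \<in> fiber X C i y" using that tsub by simp
    have "g B = g (\<zeta> (\<psi> B))" using psi1(2)[OF B] by simp
    also have "\<dots> = \<psi> B" using g psi1(1)[OF B] tZ unfolding homeomorphic_maps_def by simp
    finally show ?thesis .
  qed
  have cpsi: "continuous_map (subtopology F (fiber X C i y)) ZT \<psi>"
    using continuous_map_eq[of _ _ g \<psi>] g gpsi unfolding homeomorphic_maps_def by blast
  have "homeomorphic_maps (subtopology F (fiber X C i y)) ZT \<psi> \<zeta>"
    unfolding homeomorphic_maps_def using cpsi cz psi1 psi2 tZ tsub by auto
  hence hom: "homeomorphic_map (subtopology F (fiber X C i y)) ZT \<psi>"
    using homeomorphic_map_maps by blast
  have cubes: "c \<in> fiber_cubes X C i y n \<longleftrightarrow> (\<lambda>v\<in>vert n. \<psi> (c v)) \<in> D_cubes Zi i n"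
    if c: "c \<in> vert n \<rightarrow>\<^sub>E fiber X C i y" for n c
  proof -
    define g where "g = (\<lambda>v\<in>vert n. \<psi> (c v))"
    have gZ: "g \<in> vert n \<rightarrow>\<^sub>E Zi" unfolding g_def using c psi1(1) by auto
    have c0: "(\<lambda>v\<in>vert n. a0) \<in> C n" by (rule const_cube[OF N a0])
    have ceq: "(\<lambda>v\<in>vert n. acti (g v) (proj X C i ((\<lambda>v\<in>vert n. a0) v))) = c"
    proof (rule ext)
      fix v show "(\<lambda>v\<in>vert n. acti (g v) (proj X C i ((\<lambda>v\<in>vert n. a0) v))) v = c v"
        using c psi1(2)[of "c v"] unfolding g_def \<zeta>_def A0_def
        by (cases "v \<in> vert n") (auto simp: PiE_def extensional_def)
    qed
    have "c \<in> fiber_cubes X C i y n \<longleftrightarrow> c \<in> factor_cubes X C i n"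
      unfolding fiber_cubes_def using c by auto
    also have "\<dots> \<longleftrightarrow> g \<in> D_cubes Zi i n" using sg_cube[OF S1 c0 gZ] ceq by simp
    finally show ?thesis unfolding g_def .
  qed
  show ?thesis unfolding fiber_iso_def
    using hom cubes unfolding F_def ZT_def \<psi>_def y_def A0_def by blast
qed

section \<open>Uniformity\<close>

lemma pos_min:
  assumes Q: "compactin T Q" and f: "continuous_map T euclideanreal f" and pos: "\<forall>q\<in>Q. f q > 0"
  shows "\<exists>m>0. \<forall>q\<in>Q. m \<le> f q"
proof (cases "Q = {}")
  case True thus ?thesis by (intro exI[of _ 1]) simp
next
  case False
  have "compactin euclideanreal (f ` Q)" by (rule image_compactin[OF Q f])
  hence "compact (f ` Q)" by simp
  then obtain t where t: "t \<in> f ` Q" "\<forall>s\<in>f ` Q. t \<le> s"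
    using compact_attains_inf[of "f ` Q"] False by blast
  have "t > 0" using t(1) pos by auto
  thus ?thesis using t(2) by auto
qed

lemma closedin_ge:
  assumes "continuous_map T euclideanreal f"
  shows "closedin T {q \<in> topspace T. e \<le> f q}"
proof -
  have "closedin euclideanreal {e..}" using closed_closedin closed_atLeast by blast
  moreover have "\<forall>C. closedin euclideanreal C \<longrightarrow> closedin T {x \<in> topspace T. f x \<in> C}"
    using assms unfolding continuous_map_closedin by (elim conjE)
  ultimately have "closedin T {q \<in> topspace T. f q \<in> {e..}}" by (elim allE impE)
  thus ?thesis by simp
qed

lemma unif_add:
  assumes G: "compact_metric_group Z dZ" and e: "\<epsilon> > 0"
  shows "\<exists>\<eta>>0. \<forall>u\<in>Z. \<forall>w\<in>Z. dZ 0 u < \<eta> \<longrightarrow> dZ (u + w) w < \<epsilon>"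
proof -
  define ZT where "ZT = Metric_space.mtopology Z dZ"
  define m where "m = metric (Z, dZ)"
  have M: "Metric_space Z dZ" by (rule cmg_metric[OF G])
  have mt: "mtopology_of m = ZT" unfolding m_def ZT_def using Metric_space.mtopology_of[OF M] .
  have md: "mdist m = dZ" unfolding m_def using Metric_space.mdist_metric[OF M] .
  have tZ: "topspace ZT = Z" unfolding ZT_def using Metric_space.topspace_mtopology[OF M] .
  have Z0: "0 \<in> Z" by (rule sub0[OF cmg_sub[OF G]])
  have cadd: "continuous_map (prod_topology ZT ZT) ZT (\<lambda>p. fst p + snd p)"
    using cmg_add[OF G] unfolding ZT_def by (simp add: case_prod_beta')
  have ch: "continuous_map (prod_topology ZT ZT) euclideanreal (\<lambda>p. dZ (fst p + snd p) (snd p))"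
    using continuous_map_mdist[of "prod_topology ZT ZT" m "\<lambda>p. fst p + snd p" snd] cadd continuous_map_snd
    unfolding mt md by blast
  have cf: "continuous_map (prod_topology ZT ZT) euclideanreal (\<lambda>p. dZ 0 (fst p))"
  proof -
    have c0: "continuous_map (prod_topology ZT ZT) (mtopology_of m) (\<lambda>p. 0)" unfolding mt using Z0 tZ by simp
    have c1: "continuous_map (prod_topology ZT ZT) (mtopology_of m) fst" unfolding mt by (rule continuous_map_fst)
    show ?thesis using continuous_map_mdist[OF c0 c1] unfolding md .
  qed
  define Q where "Q = {p \<in> topspace (prod_topology ZT ZT). \<epsilon> \<le> dZ (fst p + snd p) (snd p)}"
  have cQ: "compactin (prod_topology ZT ZT) Q"
  proof (rule closedin_compact_space)
    show "compact_space (prod_topology ZT ZT)" using cmg_compact[OF G] compact_space_prod_topology unfolding ZT_def by blast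
    show "closedin (prod_topology ZT ZT) Q" unfolding Q_def by (rule closedin_ge[OF ch])
  qed
  have pos: "\<forall>q\<in>Q. dZ 0 (fst q) > 0"
  proof
    fix q assume q: "q \<in> Q"
    have qZ: "fst q \<in> Z" "snd q \<in> Z" using q tZ unfolding Q_def by auto
    have "fst q \<noteq> 0"
    proof
      assume "fst q = 0"
      hence "dZ (fst q + snd q) (snd q) = 0" using Metric_space.zero[OF M] qZ by simp
      thus False using q e unfolding Q_def by simp
    qed
    hence "dZ 0 (fst q) \<noteq> 0" using Metric_space.zero[OF M Z0 qZ(1)] by simp
    moreover have "dZ 0 (fst q) \<ge> 0" by (rule Metric_space.nonneg[OF M])
    ultimately show "dZ 0 (fst q) > 0" by simp
  qed
  obtain \<eta> where \<eta>: "\<eta> > 0" "\<forall>q\<in>Q. \<eta> \<le> dZ 0 (fst q)" using pos_min[OF cQ cf pos] by blast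
  show ?thesis
  proof (intro exI[of _ \<eta>] conjI ballI impI)
    fix u w assume u: "u \<in> Z" and w: "w \<in> Z" and d: "dZ 0 u < \<eta>"
    have "(u, w) \<notin> Q" using \<eta>(2) d by force
    thus "dZ (u + w) w < \<epsilon>" using u w tZ unfolding Q_def by auto
  qed (rule \<eta>(1))
qed

lemma small_diff:
  fixes X :: "'a::metric_space set"
  assumes K: "compact X" and S1: "structure_group X C i Zi dZi acti"
    and H: "Hausdorff_space (factor_top X C i)" and eta: "\<eta> > 0"
  shows "\<exists>\<delta>>0. \<forall>a\<in>X. \<forall>b\<in>X. \<forall>z\<in>Zi. acti z (proj X C i b) = proj X C i a \<longrightarrow> dist a b < \<delta> \<longrightarrow> dZi 0 z < \<eta>"
proof -
  define ZT where "ZT = Metric_space.mtopology Zi dZi"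
  define XT where "XT = top_of_set X"
  define F where "F = factor_top X C i"
  define T3 where "T3 = prod_topology (prod_topology XT XT) ZT"
  define m where "m = metric (Zi, dZi)"
  have G: "compact_metric_group Zi dZi" by (rule sg_grp[OF S1])
  have M: "Metric_space Zi dZi" by (rule cmg_metric[OF G])
  have mt: "mtopology_of m = ZT" unfolding m_def ZT_def using Metric_space.mtopology_of[OF M] .
  have md: "mdist m = dZi" unfolding m_def using Metric_space.mdist_metric[OF M] .
  have tZ: "topspace ZT = Zi" unfolding ZT_def using Metric_space.topspace_mtopology[OF M] .
  have Z0: "0 \<in> Zi" by (rule sub0[OF cmg_sub[OF G]])
  have cT3: "compact_space T3" unfolding T3_def XT_def ZT_def
    by (simp add: compact_space_prod_topology compact_space_XT[OF K] cmg_compact[OF G] del: prod_topology_subtopology_eu)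
  have cproj: "continuous_map XT F (proj X C i)" unfolding XT_def F_def by (rule continuous_proj)
  have c1: "continuous_map T3 F (\<lambda>q. acti (snd q) (proj X C i (snd (fst q))))"
  proof -
    have "continuous_map T3 (prod_topology ZT F) (\<lambda>q. (snd q, proj X C i (snd (fst q))))"
    proof (rule continuous_map_pairedI)
      show "continuous_map T3 ZT snd" unfolding T3_def by (rule continuous_map_snd)
      have "continuous_map T3 XT (\<lambda>q. snd (fst q))" unfolding T3_def
        using continuous_map_compose[OF continuous_map_fst continuous_map_snd] by (simp add: o_def)
      thus "continuous_map T3 F (\<lambda>q. proj X C i (snd (fst q)))"
        using continuous_map_compose[OF _ cproj] by (simp add: o_def)
    qed
    from continuous_map_compose[OF this sg_cont[OF S1, folded ZT_def F_def]]
    show ?thesis by (simp add: o_def)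
  qed
  have c2: "continuous_map T3 F (\<lambda>q. proj X C i (fst (fst q)))"
  proof -
    have "continuous_map T3 XT (\<lambda>q. fst (fst q))" unfolding T3_def
      using continuous_map_compose[OF continuous_map_fst continuous_map_fst] by (simp add: o_def)
    thus ?thesis using continuous_map_compose[OF _ cproj] by (simp add: o_def)
  qed
  have c3: "continuous_map T3 euclideanreal (\<lambda>q. dZi 0 (snd q))"
  proof -
    have c0: "continuous_map T3 (mtopology_of m) (\<lambda>p. 0)" unfolding mt using Z0 tZ by simp
    have c1: "continuous_map T3 (mtopology_of m) snd" unfolding mt T3_def by (rule continuous_map_snd)
    show ?thesis using continuous_map_mdist[OF c0 c1] unfolding md .
  qed
  define E where "E = {q \<in> topspace T3. acti (snd q) (proj X C i (snd (fst q))) = proj X C i (fst (fst q))}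
     \<inter> {q \<in> topspace T3. \<eta> \<le> dZi 0 (snd q)}"
  have clE: "closedin T3 E" unfolding E_def
    using closedin_continuous_maps_eq[OF H[folded F_def] c1 c2] closedin_ge[OF c3] by blast
  have cE: "compactin T3 E" by (rule closedin_compact_space[OF cT3 clE])
  have cQ: "compactin (prod_topology XT XT) (fst ` E)"
    using image_compactin[OF cE] continuous_map_fst unfolding T3_def by blast
  have cd: "continuous_map (prod_topology XT XT) euclideanreal (\<lambda>p. dist (fst p) (snd p))"
  proof -
    have "continuous_on (X \<times> X) (\<lambda>p. dist (fst p) (snd p))" by (intro continuous_intros)
    thus ?thesis unfolding XT_def by simp
  qed
  have pos: "\<forall>p\<in>fst ` E. dist (fst p) (snd p) > 0"
  proof
    fix p assume "p \<in> fst ` E"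
    then obtain q where q: "q \<in> E" "p = fst q" by blast
    have qs: "fst (fst q) \<in> X" "snd (fst q) \<in> X" "snd q \<in> Zi"
      using q(1) tZ unfolding E_def T3_def XT_def by auto
    show "dist (fst p) (snd p) > 0"
    proof (rule ccontr)
      assume "\<not> dist (fst p) (snd p) > 0"
      hence "fst p = snd p" by simp
      hence "acti (snd q) (proj X C i (snd (fst q))) = proj X C i (snd (fst q))"
        using q unfolding E_def by simp
      hence "snd q = 0" using sg_free[OF S1 qs(3) proj_in_factor[OF qs(2)]] by simp
      thus False using q(1) eta Metric_space.mdist_zero[OF M Z0] unfolding E_def by simp
    qed
  qed
  obtain \<delta> where \<delta>: "\<delta> > 0" "\<forall>p\<in>fst ` E. \<delta> \<le> dist (fst p) (snd p)"
    using pos_min[OF cQ cd pos] by blast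
  show ?thesis
  proof (intro exI[of _ \<delta>] conjI ballI impI)
    fix a b z assume ab: "a \<in> X" "b \<in> X" and z: "z \<in> Zi"
      and e: "acti z (proj X C i b) = proj X C i a" and d: "dist a b < \<delta>"
    show "dZi 0 z < \<eta>"
    proof (rule ccontr)
      assume "\<not> dZi 0 z < \<eta>"
      hence "((a, b), z) \<in> E" unfolding E_def T3_def XT_def using ab z e tZ by auto
      hence "\<delta> \<le> dist a b" using \<delta>(2) by force
      thus False using d by simp
    qed
  qed (rule \<delta>(1))
qed

lemma finite_delta:
  fixes P :: "'i \<Rightarrow> real \<Rightarrow> bool"
  assumes "finite I" "\<forall>i\<in>I. \<exists>d>0. \<forall>d'. 0 < d' \<and> d' \<le> d \<longrightarrow> P i d'"
  shows "\<exists>d>0. \<forall>i\<in>I. \<forall>d'. 0 < d' \<and> d' \<le> d \<longrightarrow> P i d'"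
  using assms
proof (induction I rule: finite_induct)
  case empty thus ?case by (intro exI[of _ 1]) simp
next
  case (insert x F)
  obtain d1 where d1: "d1 > 0" "\<forall>i\<in>F. \<forall>d'. 0 < d' \<and> d' \<le> d1 \<longrightarrow> P i d'"
    using insert.IH insert.prems by auto
  obtain d2 where d2: "d2 > 0" "\<forall>d'. 0 < d' \<and> d' \<le> d2 \<longrightarrow> P x d'"
    using insert.prems by auto
  show ?case
  proof (intro exI[of _ "min d1 d2"] conjI ballI allI impI)
    show "0 < min d1 d2" using d1(1) d2(1) by simp
  next
    fix i d' assume i: "i \<in> insert x F" and d': "0 < d' \<and> d' \<le> min d1 d2"
    show "P i d'"
    proof (cases "i = x")
      case True thus ?thesis using d2(2) d' by simp
    next
      case False thus ?thesis using d1(2) d' i by simp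
    qed
  qed
qed

theorem mainTheorem8:
  fixes X :: "'a::metric_space set"
    and C :: "nat \<Rightarrow> ((nat \<Rightarrow> bool) \<Rightarrow> 'a) set"
    and k :: nat
    and Z :: "nat \<Rightarrow> 'z::ab_group_add set"
    and dZ :: "nat \<Rightarrow> 'z \<Rightarrow> 'z \<Rightarrow> real"
    and act :: "nat \<Rightarrow> 'z \<Rightarrow> 'a set \<Rightarrow> 'a set"
  assumes "compact_nilspace X C"
    and "k_step_nilspace k X C"
    and "\<forall>i\<in>{1..k}. structure_group X C i (Z i) (dZ i) (act i)"
    and "\<forall>i\<in>{1..k}. NSS_group (Z i) (dZ i)"
  shows "\<exists>\<psi> :: nat \<Rightarrow> 'a set \<Rightarrow> 'a set \<Rightarrow> 'z.
    (\<forall>i\<in>{1..k}. \<forall>y\<in>factor X C (i - 1). fiber_iso X C i y (Z i) (dZ i) (\<psi> i y)) \<and>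
    (\<forall>\<epsilon>>0. \<exists>\<delta>>0. \<forall>i\<in>{1..k}. \<forall>y\<in>factor X C (i - 1). \<forall>a\<in>X. \<forall>b\<in>X.
        proj X C (i - 1) a = y \<longrightarrow> proj X C (i - 1) b = y \<longrightarrow> dist a b < \<delta> \<longrightarrow>
        dZ i (\<psi> i y (proj X C i a)) (\<psi> i y (proj X C i b)) < \<epsilon>)"
proof -
  have N: "nilspace X C" and K: "compact X"
    and Cl: "\<And>n. closedin (product_topology (\<lambda>_. top_of_set X) (vert n)) (C n)"
    using assms(1) unfolding compact_nilspace_def by auto
  have SG: "\<And>i. i \<in> {1..k} \<Longrightarrow> structure_group X C i (Z i) (dZ i) (act i)" using assms(3) by blast
  have Sle: "\<forall>j\<in>{1..i}. structure_group X C j (Z j) (dZ j) (act j)" if "i \<in> {1..k}" for i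
    using SG that by auto
  define a0 where "a0 i y = (SOME a. a \<in> X \<and> proj X C (i - 1) a = y)" for i y
  define \<psi> where "\<psi> i y = (\<lambda>B. SOME z. z \<in> Z i \<and> act i z (proj X C i (a0 i y)) = B)" for i y
  have a0: "a0 i y \<in> X \<and> proj X C (i - 1) (a0 i y) = y" if yf: "y \<in> factor X C (i - 1)" for i y
  proof -
    obtain a where "a \<in> X" "y = proj X C (i - 1) a" using yf unfolding factor_def by blast
    hence "\<exists>a. a \<in> X \<and> proj X C (i - 1) a = y" by blast
    thus ?thesis unfolding a0_def by (rule someI_ex)
  qed
  have P1: "\<forall>i\<in>{1..k}. \<forall>y\<in>factor X C (i - 1). fiber_iso X C i y (Z i) (dZ i) (\<psi> i y)"
  proof (intro ballI)
    fix i y assume i: "i \<in> {1..k}" and y: "y \<in> factor X C (i - 1)"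
    have "fiber_iso X C i (proj X C (i - 1) (a0 i y)) (Z i) (dZ i) (\<psi> i y)"
      unfolding \<psi>_def by (rule fiber_iso_construct[OF N Cl K Sle[OF i] SG[OF i]]) (use a0[OF y] in blast)
    thus "fiber_iso X C i y (Z i) (dZ i) (\<psi> i y)" using a0[OF y] by simp
  qed
  have P2: "\<exists>\<delta>>0. \<forall>i\<in>{1..k}. \<forall>y\<in>factor X C (i - 1). \<forall>a\<in>X. \<forall>b\<in>X.
        proj X C (i - 1) a = y \<longrightarrow> proj X C (i - 1) b = y \<longrightarrow> dist a b < \<delta> \<longrightarrow>
        dZ i (\<psi> i y (proj X C i a)) (\<psi> i y (proj X C i b)) < \<epsilon>" if e: "\<epsilon> > 0" for \<epsilon>
  proof -
    define P where "P i \<delta> = (\<forall>y\<in>factor X C (i - 1). \<forall>a\<in>X. \<forall>b\<in>X.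
        proj X C (i - 1) a = y \<longrightarrow> proj X C (i - 1) b = y \<longrightarrow> dist a b < \<delta> \<longrightarrow>
        dZ i (\<psi> i y (proj X C i a)) (\<psi> i y (proj X C i b)) < \<epsilon>)" for i \<delta>
    have "\<exists>d>0. \<forall>d'. 0 < d' \<and> d' \<le> d \<longrightarrow> P i d'" if i: "i \<in> {1..k}" for i
    proof -
      have S1: "structure_group X C i (Z i) (dZ i) (act i)" by (rule SG[OF i])
      have G: "compact_metric_group (Z i) (dZ i)" by (rule sg_grp[OF S1])
      have GS: "is_subgroup_add (Z i)" by (rule cmg_sub[OF G])
      obtain \<eta> where \<eta>: "\<eta> > 0" "\<forall>u\<in>Z i. \<forall>w\<in>Z i. dZ i 0 u < \<eta> \<longrightarrow> dZ i (u + w) w < \<epsilon>"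
        using unif_add[OF G e] by blast
      have H: "Hausdorff_space (factor_top X C i)" by (rule factor_Hausdorff[OF N Cl K Sle[OF i]])
      obtain d where d: "d > 0" "\<forall>a\<in>X. \<forall>b\<in>X. \<forall>z\<in>Z i. act i z (proj X C i b) = proj X C i a \<longrightarrow> dist a b < d \<longrightarrow> dZ i 0 z < \<eta>"
        using small_diff[OF K S1 H \<eta>(1)] by blast
      show ?thesis
      proof (intro exI[of _ d] conjI allI impI)
        fix d' assume d': "0 < d' \<and> d' \<le> d"
        show "P i d'" unfolding P_def
        proof (intro ballI impI)
          fix y a b assume y: "y \<in> factor X C (i - 1)" and ab: "a \<in> X" "b \<in> X"
            and pa: "proj X C (i - 1) a = y" and pb: "proj X C (i - 1) b = y" and dab: "dist a b < d'"
          have A: "a0 i y \<in> X" "proj X C (i - 1) (a0 i y) = y" using a0[OF y] by auto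
          have fa: "proj X C i a \<in> fiber X C i (proj X C (i - 1) (a0 i y))" unfolding fiber_mem using ab pa A by auto
          have fb: "proj X C i b \<in> fiber X C i (proj X C (i - 1) (a0 i y))" unfolding fiber_mem using ab pb A by auto
          define za where "za = \<psi> i y (proj X C i a)"
          define zb where "zb = \<psi> i y (proj X C i b)"
          have za: "za \<in> Z i" "act i za (proj X C i (a0 i y)) = proj X C i a"
            using psi_props[OF S1 A(1) fa] unfolding za_def \<psi>_def by auto
          have zb: "zb \<in> Z i" "act i zb (proj X C i (a0 i y)) = proj X C i b"
            using psi_props[OF S1 A(1) fb] unfolding zb_def \<psi>_def by auto
          obtain z where z: "z \<in> Z i" "act i z (proj X C i b) = proj X C i a"
            using sg_orbit[OF S1 ab(2) ab(1)] pa pb by auto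
          have small: "dZ i 0 z < \<eta>" using d(2) ab z dab d' by auto
          have "act i (z + zb) (proj X C i (a0 i y)) = act i z (act i zb (proj X C i (a0 i y)))"
            by (rule sg_add[OF S1 z(1) zb(1) proj_in_factor[OF A(1)]])
          also have "\<dots> = act i za (proj X C i (a0 i y))" using zb(2) z(2) za(2) by simp
          finally have "z + zb = za"
            by (rule sg_unique[OF S1 subadd[OF GS z(1) zb(1)] za(1) proj_in_factor[OF A(1)]])
          hence "dZ i za zb = dZ i (z + zb) zb" by simp
          also have "\<dots> < \<epsilon>" using \<eta>(2) z(1) zb(1) small by blast
          finally show "dZ i (\<psi> i y (proj X C i a)) (\<psi> i y (proj X C i b)) < \<epsilon>"
            unfolding za_def zb_def .
        qed
      qed (rule d(1))
    qed
    hence "\<exists>d>0. \<forall>i\<in>{1..k}. \<forall>d'. 0 < d' \<and> d' \<le> d \<longrightarrow> P i d'"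
      by (intro finite_delta) auto
    then obtain d where "d > 0" "\<forall>i\<in>{1..k}. P i d" by auto
    thus ?thesis unfolding P_def by blast
  qed
  show ?thesis using P1 P2 by blast
qed

end
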